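(* Let $(\mathbf{x}^*,\mathbf{u}^* )$ be an optimal solution of problem (P), and let $\pi^*\in\mathbb{R}$ and $q_i$ ($i\in[N]$) be multipliers associated with it as described in the context. Then for each $i\in[N]$ and a.e. $t\in[0,T]$: $u_i^*(t)=1$ if $\pi^*-\pi(t)-\beta_i q_i(t)>0$; $u_i^*(t)=0$ if $\pi^*-\pi(t)-\beta_i q_i(t)<0$; $u_i^*(t)=\underline{u}_i(t)$ if $\pi^*-\pi(t)-\beta_i q_i(t)=0$ and $x_i^*(t)=L_i$; $u_i^*(t)=\overline{u}_i(t)$ if $\pi^*-\pi(t)-\beta_i q_i(t)=0$ and $x_i^*(t)=U_i$.
   Context: Data: integers $N\ge 1$, $T>0$, $E>0$, real constants $\alpha_i,\beta_i$, $L_i<U_i$, $x_{i0}$ ($i\in[N]:=\{1,\dots,N\}$), price $\pi:[0,T]\to\mathbb{R}$, ambient temperature $\hat{x}:[0,T]\to\mathbb{R}$ with $\hat{x}(t)>\max_iU_i$. Problem (P): over measurable $u_i:[0,T]\to[0,1]$, minimize $\int_0^T\pi(t)\sum_iu_i(t)dt$ subject to $\dot{x}_i=-\alpha_i(x_i-\hat{x}(t))-\beta_iu_i$ a.e., $x_i(0)=x_{i0}$; $\dot{x}_{N+1}=\sum_iu_i$, $x_{N+1}(0)=0$, $x_{N+1}(T)=E$; $L_i\le x_i(t)\le U_i$ for all $t$. Define $\overline{u}_i(t):=\frac{\alpha_i}{\beta_i}(\hat{x}(t)-U_i)$, $\underline{u}_i(t):=\frac{\alpha_i}{\beta_i}(\hat{x}(t)-L_i)$.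 Standing assumptions (A1): $L_i\le x_{i0}\le U_i$; $E\in[\overline{E},\underline{E})$, $\overline{E}:=\int_0^T\sum_i\max\{0,\overline{u}_i\}dt$, $\underline{E}:=\int_0^T\sum_i\min\{\underline{u}_i,1\}dt$; for all $i,t$: $-\alpha_i(L_i-\hat{x}(t))>0$ and $-\alpha_i(U_i-\hat{x}(t))-\beta_i<0$. (A2): $\pi,\hat{x}$ differentiable; $\pi$ not of form $Ae^{\alpha_it}+B$ on any subinterval of positive measure. Multipliers: a scalar $\pi^*$, absolutely continuous $p_i$, functions $q_i$ and positive Radon measures $\mu_i,\ell_i$ on $[0,T]$ with $\dot{p}_i=\alpha_iq_i$ a.e., $q_i(t)=p_i(t)+\mu_i([0,t))-\ell_i([0,t))$ for $t<T$, $q_i(T)=p_i(T)+\mu_i([0,T])-\ell_i([0,T])=0$, $\operatorname{supp}\ell_i\subset\{x_i^*=L_i\}$, $\operatorname{supp}\mu_i\subset\{x_i^*=U_i\}$, and for a.e. $t$ and all $u\in[0,1]^N$: $\sum_i(\pi^*-\pi(t)-\beta_iq_i(t))u_i^*(t)\ge\sum_i(\pi^*-\pi(t)-\beta_iq_i(t))u_i$. *)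

theory Defs
  imports "HOL-Analysis.Analysis"
begin

definition abs_continuous_on :: "real \<Rightarrow> real \<Rightarrow> (real \<Rightarrow> real) \<Rightarrow> bool" where
  "abs_continuous_on a b f \<longleftrightarrow>
     (\<forall>\<epsilon>>0. \<exists>\<delta>>0. \<forall>(n::nat) (c::nat \<Rightarrow> real) (d::nat \<Rightarrow> real).
        (\<forall>k<n. a \<le> c k \<and> c k \<le> d k \<and> d k \<le> b) \<and>
        (\<forall>k. Suc k < n \<longrightarrow> d k \<le> c (Suc k)) \<and>
        (\<Sum>k<n. d k - c k) < \<delta> \<longrightarrow>
        (\<Sum>k<n. \<bar>f (d k) - f (c k)\<bar>) < \<epsilon>)"

definition meas_support :: "real measure \<Rightarrow> real set" where
  "meas_support M = {t \<in> space M. \<forall>S. open S \<and> t \<in> S \<longrightarrow> emeasure M (S \<inter> space M) \<noteq> 0}"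

definition u_over :: "(nat \<Rightarrow> real) \<Rightarrow> (nat \<Rightarrow> real) \<Rightarrow> (real \<Rightarrow> real) \<Rightarrow> (nat \<Rightarrow> real) \<Rightarrow> nat \<Rightarrow> real \<Rightarrow> real" where
  "u_over \<alpha> \<beta> xh U i t = \<alpha> i / \<beta> i * (xh t - U i)"

definition u_under :: "(nat \<Rightarrow> real) \<Rightarrow> (nat \<Rightarrow> real) \<Rightarrow> (real \<Rightarrow> real) \<Rightarrow> (nat \<Rightarrow> real) \<Rightarrow> nat \<Rightarrow> real \<Rightarrow> real" where
  "u_under \<alpha> \<beta> xh L i t = \<alpha> i / \<beta> i * (xh t - L i)"

text \<open>Feasible pairs (u, x) of problem (P). Devices are indexed 0..N-1; the state x N plays
  the role of x_{N+1} (accumulated energy).\<close>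
definition feasible ::
  "nat \<Rightarrow> real \<Rightarrow> real \<Rightarrow> (nat \<Rightarrow> real) \<Rightarrow> (nat \<Rightarrow> real) \<Rightarrow> (nat \<Rightarrow> real) \<Rightarrow> (nat \<Rightarrow> real)
   \<Rightarrow> (nat \<Rightarrow> real) \<Rightarrow> (real \<Rightarrow> real)
   \<Rightarrow> (nat \<Rightarrow> real \<Rightarrow> real) \<Rightarrow> (nat \<Rightarrow> real \<Rightarrow> real) \<Rightarrow> bool" where
  "feasible N T E \<alpha> \<beta> L U x0 xh u x \<longleftrightarrow>
     (\<forall>i<N. set_borel_measurable lebesgue {0..T} (u i) \<and>
            (\<forall>t\<in>{0..T}. 0 \<le> u i t \<and> u i t \<le> 1)) \<and>
     (\<forall>i<N. abs_continuous_on 0 T (x i) \<and> x i 0 = x0 i \<and>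
            (AE t in lborel. t \<in> {0..T} \<longrightarrow>
               (x i has_real_derivative (- \<alpha> i * (x i t - xh t) - \<beta> i * u i t)) (at t within {0..T})) \<and>
            (\<forall>t\<in>{0..T}. L i \<le> x i t \<and> x i t \<le> U i)) \<and>
     abs_continuous_on 0 T (x N) \<and> x N 0 = 0 \<and>
     (AE t in lborel. t \<in> {0..T} \<longrightarrow>
        (x N has_real_derivative (\<Sum>i<N. u i t)) (at t within {0..T})) \<and>
     x N T = E"

definition cost :: "nat \<Rightarrow> real \<Rightarrow> (real \<Rightarrow> real) \<Rightarrow> (nat \<Rightarrow> real \<Rightarrow> real) \<Rightarrow> real" where
  "cost N T \<pi> u = (LINT t:{0..T}|lborel. \<pi> t * (\<Sum>i<N. u i t))"

definition optimal ::
  "nat \<Rightarrow> real \<Rightarrow> real \<Rightarrow> (nat \<Rightarrow> real) \<Rightarrow> (nat \<Rightarrow> real) \<Rightarrow> (nat \<Rightarrow> real) \<Rightarrow> (nat \<Rightarrow> real)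
   \<Rightarrow> (nat \<Rightarrow> real) \<Rightarrow> (real \<Rightarrow> real) \<Rightarrow> (real \<Rightarrow> real)
   \<Rightarrow> (nat \<Rightarrow> real \<Rightarrow> real) \<Rightarrow> (nat \<Rightarrow> real \<Rightarrow> real) \<Rightarrow> bool" where
  "optimal N T E \<alpha> \<beta> L U x0 xh \<pi> u x \<longleftrightarrow>
     feasible N T E \<alpha> \<beta> L U x0 xh u x \<and>
     (\<forall>u' x'. feasible N T E \<alpha> \<beta> L U x0 xh u' x' \<longrightarrow> cost N T \<pi> u \<le> cost N T \<pi> u')"

end

theory Submission
  imports Defs
begin

theorem lemma1:
  fixes N :: nat and T E :: real
    and \<alpha> \<beta> L U x0 :: "nat \<Rightarrow> real"
    and \<pi> xh :: "real \<Rightarrow> real"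
    and u x :: "nat \<Rightarrow> real \<Rightarrow> real"
    and \<pi>s :: real
    and p q :: "nat \<Rightarrow> real \<Rightarrow> real"
    and \<mu> lm :: "nat \<Rightarrow> real measure"
  assumes N: "N \<ge> 1" and T: "T > 0" and Epos: "E > 0"
    and LU: "\<forall>i<N. L i < U i"
    and xh_gt: "\<forall>t\<in>{0..T}. \<forall>i<N. xh t > U i"
    \<comment> \<open>(A1)\<close>
    and A1_init: "\<forall>i<N. L i \<le> x0 i \<and> x0 i \<le> U i"
    and A1_E_low: "(LINT t:{0..T}|lborel. (\<Sum>i<N. max 0 (u_over \<alpha> \<beta> xh U i t))) \<le> E"
    and A1_E_up: "E < (LINT t:{0..T}|lborel. (\<Sum>i<N. min (u_under \<alpha> \<beta> xh L i t) 1))"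
    and A1_L: "\<forall>i<N. \<forall>t\<in>{0..T}. - \<alpha> i * (L i - xh t) > 0"
    and A1_U: "\<forall>i<N. \<forall>t\<in>{0..T}. - \<alpha> i * (U i - xh t) - \<beta> i < 0"
    \<comment> \<open>(A2)\<close>
    and A2_diff: "\<forall>t\<in>{0..T}. \<pi> differentiable (at t within {0..T}) \<and> xh differentiable (at t within {0..T})"
    and A2_exp: "\<forall>i<N. \<forall>a b. 0 \<le> a \<and> a < b \<and> b \<le> T \<longrightarrow>
                   \<not> (\<exists>A B. \<forall>t\<in>{a..b}. \<pi> t = A * exp (\<alpha> i * t) + B)"
    \<comment> \<open>optimality\<close>
    and opt: "optimal N T E \<alpha> \<beta> L U x0 xh \<pi> u x"
    \<comment> \<open>multipliers\<close>
    and p_ac: "\<forall>i<N. abs_continuous_on 0 T (p i)"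
    and p_deriv: "\<forall>i<N. AE t in lborel. t \<in> {0..T} \<longrightarrow>
                    (p i has_real_derivative (\<alpha> i * q i t)) (at t within {0..T})"
    and mu_meas: "\<forall>i<N. sets (\<mu> i) = sets (restrict_space borel {0..T}) \<and> emeasure (\<mu> i) {0..T} < \<infinity>"
    and ell_meas: "\<forall>i<N. sets (lm i) = sets (restrict_space borel {0..T}) \<and> emeasure (lm i) {0..T} < \<infinity>"
    and q_def: "\<forall>i<N. \<forall>t\<in>{0..<T}. q i t = p i t + measure (\<mu> i) {0..<t} - measure (lm i) {0..<t}"
    and q_T: "\<forall>i<N. q i T = p i T + measure (\<mu> i) {0..T} - measure (lm i) {0..T} \<and> q i T = 0"
    and supp_ell: "\<forall>i<N. meas_support (lm i) \<subseteq> {t. x i t = L i}"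
    and supp_mu: "\<forall>i<N. meas_support (\<mu> i) \<subseteq> {t. x i t = U i}"
    and maxcond: "AE t in lborel. t \<in> {0..T} \<longrightarrow>
                   (\<forall>v::nat \<Rightarrow> real. (\<forall>i<N. 0 \<le> v i \<and> v i \<le> 1) \<longrightarrow>
                      (\<Sum>i<N. (\<pi>s - \<pi> t - \<beta> i * q i t) * u i t)
                        \<ge> (\<Sum>i<N. (\<pi>s - \<pi> t - \<beta> i * q i t) * v i))"
  shows "\<forall>i<N. AE t in lborel. t \<in> {0..T} \<longrightarrow>
           (\<pi>s - \<pi> t - \<beta> i * q i t > 0 \<longrightarrow> u i t = 1) \<and>
           (\<pi>s - \<pi> t - \<beta> i * q i t < 0 \<longrightarrow> u i t = 0) \<and>
           (\<pi>s - \<pi> t - \<beta> i * q i t = 0 \<and> x i t = L i \<longrightarrow> u i t = u_under \<alpha> \<beta> xh L i t) \<and>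
           (\<pi>s - \<pi> t - \<beta> i * q i t = 0 \<and> x i t = U i \<longrightarrow> u i t = u_over \<alpha> \<beta> xh U i t)"
proof (intro allI impI)
  fix i assume i: "i < N"
  have feas: "feasible N T E \<alpha> \<beta> L U x0 xh u x" using opt unfolding optimal_def by blast
  have ub: "\<forall>j<N. \<forall>t\<in>{0..T}. 0 \<le> u j t \<and> u j t \<le> 1" using feas unfolding feasible_def by blast
  have xb: "\<forall>t\<in>{0..T}. L i \<le> x i t \<and> x i t \<le> U i" using feas i unfolding feasible_def by blast
  have xd: "AE t in lborel. t \<in> {0..T} \<longrightarrow>
               (x i has_real_derivative (- \<alpha> i * (x i t - xh t) - \<beta> i * u i t)) (at t within {0..T})"
    using feas i unfolding feasible_def by blast
  have T0: "0 \<in> {0..T}" using T by simp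
  have apos: "\<alpha> i > 0"
  proof -
    have "- \<alpha> i * (L i - xh 0) > 0" using A1_L i T0 by blast
    moreover have "xh 0 > L i" using xh_gt T0 i LU by force
    ultimately have "\<alpha> i * (xh 0 - L i) > 0" "xh 0 - L i > 0" by (simp_all add: algebra_simps)
    then show ?thesis by (simp add: zero_less_mult_iff)
  qed
  have bpos: "\<beta> i > 0"
  proof -
    have "- \<alpha> i * (U i - xh 0) - \<beta> i < 0" using A1_U i T0 by blast
    moreover have "xh 0 > U i" using xh_gt T0 i by force
    moreover have "\<alpha> i * (xh 0 - U i) > 0" using apos calculation(2) by simp
    ultimately show ?thesis by (simp add: algebra_simps)
  qed
  show "AE t in lborel. t \<in> {0..T} \<longrightarrow>
           (\<pi>s - \<pi> t - \<beta> i * q i t > 0 \<longrightarrow> u i t = 1) \<and>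
           (\<pi>s - \<pi> t - \<beta> i * q i t < 0 \<longrightarrow> u i t = 0) \<and>
           (\<pi>s - \<pi> t - \<beta> i * q i t = 0 \<and> x i t = L i \<longrightarrow> u i t = u_under \<alpha> \<beta> xh L i t) \<and>
           (\<pi>s - \<pi> t - \<beta> i * q i t = 0 \<and> x i t = U i \<longrightarrow> u i t = u_over \<alpha> \<beta> xh U i t)"
    using maxcond xd AE_lborel_singleton[of 0] AE_lborel_singleton[of T]
  proof eventually_elim
    case (elim t)
    show ?case
    proof (intro impI conjI)
      assume tin: "t \<in> {0..T}"
      define C where "C = (\<lambda>j. \<pi>s - \<pi> t - \<beta> j * q j t)"
      have mx: "\<And>v. (\<forall>j<N. 0 \<le> v j \<and> v j \<le> 1) \<Longrightarrow> (\<Sum>j<N. C j * v j) \<le> (\<Sum>j<N. C j * u j t)"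
        using elim(1) tin unfolding C_def by blast
      have sumeq: "(\<Sum>j<N. C j * (if j = i then a else u j t)) = (\<Sum>j<N. C j * u j t) + C i * (a - u i t)" for a
      proof -
        have "(\<Sum>j<N. C j * (if j = i then a else u j t)) = (\<Sum>j<N. C j * u j t + (if j = i then C i * (a - u i t) else 0))"
          by (rule sum.cong) (auto simp: algebra_simps)
        also have "\<dots> = (\<Sum>j<N. C j * u j t) + C i * (a - u i t)"
          using i by (simp add: sum.distrib)
        finally show ?thesis .
      qed
      have vok: "\<forall>j<N. 0 \<le> (if j = i then a else u j t) \<and> (if j = i then a else u j t) \<le> 1"
        if "0 \<le> a" "a \<le> 1" for a :: real using ub tin that by auto
      have uit: "0 \<le> u i t" "u i t \<le> 1" using ub tin i by auto
      {
        assume c: "\<pi>s - \<pi> t - \<beta> i * q i t > 0"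
        have "C i * (1 - u i t) \<le> 0" using mx[OF vok[of 1]] sumeq[of 1] by simp
        moreover have "C i > 0" using c C_def by simp
        ultimately show "u i t = 1" using uit by (smt (verit) mult_pos_pos)
      }
      {
        assume c: "\<pi>s - \<pi> t - \<beta> i * q i t < 0"
        have "C i * (0 - u i t) \<le> 0" using mx[OF vok[of 0]] sumeq[of 0] by simp
        moreover have "C i < 0" using c C_def by simp
        ultimately show "u i t = 0" using uit by (smt (verit) mult_neg_neg)
      }
      have tint: "0 < t" "t < T" using tin elim(3,4) by auto
      have "t \<in> interior {0..T}" using tint by simp
      then have der: "(x i has_real_derivative (- \<alpha> i * (x i t - xh t) - \<beta> i * u i t)) (at t)"
        using elim(2) tin at_within_interior by metis
      have d: "0 < min t (T - t)" using tint by simp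
      have near: "\<And>y. \<bar>t - y\<bar> < min t (T - t) \<Longrightarrow> y \<in> {0..T}" by auto
      {
        assume c: "\<pi>s - \<pi> t - \<beta> i * q i t = 0 \<and> x i t = L i"
        have "\<forall>y. \<bar>t - y\<bar> < min t (T - t) \<longrightarrow> x i t \<le> x i y" using c xb near by auto
        then have "- \<alpha> i * (x i t - xh t) - \<beta> i * u i t = 0" using DERIV_local_min[OF der d] by blast
        then show "u i t = u_under \<alpha> \<beta> xh L i t" using c bpos unfolding u_under_def
          by (simp add: field_simps)
      }
      {
        assume c: "\<pi>s - \<pi> t - \<beta> i * q i t = 0 \<and> x i t = U i"
        have "\<forall>y. \<bar>t - y\<bar> < min t (T - t) \<longrightarrow> x i y \<le> x i t" using c xb near by auto
        then have "- \<alpha> i * (x i t - xh t) - \<beta> i * u i t = 0" using DERIV_local_max[OF der d] by blast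
        then show "u i t = u_over \<alpha> \<beta> xh U i t" using c bpos unfolding u_over_def
          by (simp add: field_simps)
      }
    qed
  qed
qed

end
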